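(* For $\vec\mu\in\mathbb{R}^k$ and $\vec v\in(\mathbb{R}^{\ge0})^k$, let $f(\vec\mu,\vec v)$ be the supremum of $\mathbb{E}[\max_{j<k}\vec x(j)]$ over all random vectors $\vec x$ in $\mathbb{R}^k$ with $\mathbb{E}[\vec x]=\vec\mu$ and $\mathrm{Var}(\vec x(j))=\vec v(j)^2$ for all $j<k$. Then for every $\vec\mu\in\mathbb{R}^k$, $\vec v\in(\mathbb{R}^{\ge0})^k$: (1) $\max_{j<k}\vec\mu(j)\le f(\vec\mu,\vec v)\le\max_{j<k}\vec\mu(j)+\frac12\sum_{j<k}\vec v(j)$; (2) if $\vec\mu_i\in\mathbb{R}^k,\vec v_i\in(\mathbb{R}^{\ge0})^k$ for $i\in\{0,1\}$ satisfy $\vec\mu=\frac12(\vec\mu_0+\vec\mu_1)$ and $\vec v(j)^2=\frac12\sum_{i\in 2}\big[\vec v_i(j)^2+(\vec\mu_i(j)-\vec\mu(j))^2\big]$ for all $j<k$, then $\frac12\big(f(\vec\mu_0,\vec v_0)+f(\vec\mu_1,\vec v_1)\big)\le f(\vec\mu,\vec v)$. *)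

theory Defs
  imports "HOL-Probability.Probability"
begin

definition admissible_law :: "real^'k \<Rightarrow> real^'k \<Rightarrow> (real^'k) measure \<Rightarrow> bool" where
  "admissible_law mu v M \<longleftrightarrow>
     prob_space M \<and> sets M = sets borel \<and>
     (\<forall>j. integrable M (\<lambda>x. x $ j)) \<and>
     (\<forall>j. integrable M (\<lambda>x. (x $ j)\<^sup>2)) \<and>
     (\<forall>j. (\<integral>x. x $ j \<partial>M) = mu $ j) \<and>
     (\<forall>j. (\<integral>x. (x $ j - (\<integral>y. y $ j \<partial>M))\<^sup>2 \<partial>M) = (v $ j)\<^sup>2)"

definition fmax :: "real^'k \<Rightarrow> real^'k \<Rightarrow> real" where
  "fmax mu v = Sup {(\<integral>x. (MAX j. x $ j) \<partial>M) | M. admissible_law mu v M}"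

end

theory Submission
  imports Defs
begin

definition mix :: "'a measure \<Rightarrow> 'a measure \<Rightarrow> 'a measure" where
  "mix M0 M1 = bind (measure_pmf (bernoulli_pmf (1/2))) (\<lambda>b. if b then M0 else M1)"

lemma mix_props:
  fixes M0 M1 :: "'a::topological_space measure"
  assumes P0: "prob_space M0" and P1: "prob_space M1"
    and S0: "sets M0 = sets borel" and S1: "sets M1 = sets borel"
  shows "sets (mix M0 M1) = sets borel"
    and "\<And>f. f \<in> borel_measurable borel \<Longrightarrow>
           (\<integral>\<^sup>+x. f x \<partial>mix M0 M1) = (\<integral>\<^sup>+x. f x \<partial>M0) / 2 + (\<integral>\<^sup>+x. f x \<partial>M1) / 2"
    and "prob_space (mix M0 M1)"
proof -
  have K: "(\<lambda>b. if b then M0 else M1) \<in> measurable (measure_pmf (bernoulli_pmf (1/2))) (subprob_algebra borel)"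
    using P0 P1 S0 S1 by (auto simp: space_subprob_algebra prob_space_imp_subprob_space)
  show S: "sets (mix M0 M1) = sets borel"
    unfolding mix_def by (rule sets_bind[where N=borel]) (use S0 S1 in auto)
  show NN: "(\<integral>\<^sup>+x. f x \<partial>mix M0 M1) = (\<integral>\<^sup>+x. f x \<partial>M0) / 2 + (\<integral>\<^sup>+x. f x \<partial>M1) / 2"
    if f: "f \<in> borel_measurable borel" for f
  proof -
    have "(\<integral>\<^sup>+x. f x \<partial>mix M0 M1) = (\<integral>\<^sup>+b. (\<integral>\<^sup>+y. f y \<partial>(if b then M0 else M1)) \<partial>measure_pmf (bernoulli_pmf (1/2)))"
      unfolding mix_def by (rule nn_integral_bind[OF f K])
    also have "\<dots> = (\<Sum>b\<in>UNIV. (\<integral>\<^sup>+y. f y \<partial>(if b then M0 else M1)) * ennreal (pmf (bernoulli_pmf (1/2)) b))"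
      by (rule nn_integral_measure_pmf_support) auto
    also have "\<dots> = (\<integral>\<^sup>+x. f x \<partial>M0) / 2 + (\<integral>\<^sup>+x. f x \<partial>M1) / 2"
      by (simp add: UNIV_bool ennreal_divide_numeral[symmetric] divide_ennreal_def)
    finally show ?thesis .
  qed
  show "prob_space (mix M0 M1)"
  proof
    have "emeasure (mix M0 M1) (space (mix M0 M1)) = (\<integral>\<^sup>+x. 1 \<partial>mix M0 M1)" by simp
    also have "\<dots> = (\<integral>\<^sup>+x. 1 \<partial>M0) / 2 + (\<integral>\<^sup>+x. 1 \<partial>M1) / 2" by (rule NN) simp
    also have "\<dots> = 1"
      using prob_space.emeasure_space_1[OF P0] prob_space.emeasure_space_1[OF P1]
      using ennreal_plus[of "1/2" "1/2", symmetric] by (simp add: divide_ennreal_def)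
    finally show "emeasure (mix M0 M1) (space (mix M0 M1)) = 1" .
  qed
qed

lemma ennreal_half_sum: "0 \<le> a \<Longrightarrow> 0 \<le> b \<Longrightarrow> ennreal a / 2 + ennreal b / 2 = ennreal ((a + b) / 2)"
proof -
  have L1: "0 \<le> a \<Longrightarrow> ennreal a / 2 = ennreal (a / 2)" for a
    by (metis divide_ennreal ennreal_numeral zero_less_numeral)
  show "0 \<le> a \<Longrightarrow> 0 \<le> b \<Longrightarrow> ?thesis" by (simp add: L1 add_divide_distrib)
qed

lemma mix_integral_nonneg:
  fixes M0 M1 :: "'a::topological_space measure" and g :: "'a \<Rightarrow> real"
  assumes P0: "prob_space M0" and P1: "prob_space M1"
    and S0: "sets M0 = sets borel" and S1: "sets M1 = sets borel"
    and g: "g \<in> borel_measurable borel" and I0: "integrable M0 g" and I1: "integrable M1 g"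
    and nn: "\<And>x. 0 \<le> g x"
  shows "integrable (mix M0 M1) g \<and> integral\<^sup>L (mix M0 M1) g = (integral\<^sup>L M0 g + integral\<^sup>L M1 g) / 2"
proof -
  note MP = mix_props[OF P0 P1 S0 S1]
  have gm: "g \<in> borel_measurable (mix M0 M1)"
    using g by (simp add: measurable_cong_sets[OF MP(1) refl])
  have e0: "(\<integral>\<^sup>+x. ennreal (g x) \<partial>M0) = ennreal (integral\<^sup>L M0 g)"
    by (rule nn_integral_eq_integral[OF I0]) (simp add: nn)
  have e1: "(\<integral>\<^sup>+x. ennreal (g x) \<partial>M1) = ennreal (integral\<^sup>L M1 g)"
    by (rule nn_integral_eq_integral[OF I1]) (simp add: nn)
  have i0: "integral\<^sup>L M0 g \<ge> 0" "integral\<^sup>L M1 g \<ge> 0" 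
    using nn by (simp_all add: integral_nonneg)
  have em: "(\<integral>\<^sup>+x. ennreal (g x) \<partial>mix M0 M1) = ennreal ((integral\<^sup>L M0 g + integral\<^sup>L M1 g) / 2)"
  proof -
    have "(\<integral>\<^sup>+x. ennreal (g x) \<partial>mix M0 M1) = (\<integral>\<^sup>+x. ennreal (g x) \<partial>M0) / 2 + (\<integral>\<^sup>+x. ennreal (g x) \<partial>M1) / 2"
      by (rule MP(2)) (use g in measurable)
    also have "\<dots> = ennreal (integral\<^sup>L M0 g) / 2 + ennreal (integral\<^sup>L M1 g) / 2"
      by (simp only: e0 e1)
    also have "\<dots> = ennreal ((integral\<^sup>L M0 g + integral\<^sup>L M1 g) / 2)"
      by (rule ennreal_half_sum[OF i0])
    finally show ?thesis .
  qed
  have int: "integrable (mix M0 M1) g"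
    by (rule integrableI_nonneg[OF gm]) (simp_all add: nn em)
  have "ennreal (integral\<^sup>L (mix M0 M1) g) = (\<integral>\<^sup>+x. ennreal (g x) \<partial>mix M0 M1)"
    by (rule nn_integral_eq_integral[OF int, symmetric]) (simp add: nn)
  then have "ennreal (integral\<^sup>L (mix M0 M1) g) = ennreal ((integral\<^sup>L M0 g + integral\<^sup>L M1 g) / 2)"
    using em by simp
  moreover have "integral\<^sup>L (mix M0 M1) g \<ge> 0" using nn by (simp add: integral_nonneg)
  ultimately have "integral\<^sup>L (mix M0 M1) g = (integral\<^sup>L M0 g + integral\<^sup>L M1 g) / 2"
    using i0 ennreal_inj by (metis add_nonneg_nonneg divide_nonneg_pos zero_less_numeral)
  then show ?thesis using int by simp
qed

lemma mix_integral:
  fixes M0 M1 :: "'a::topological_space measure" and g :: "'a \<Rightarrow> real"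
  assumes P0: "prob_space M0" and P1: "prob_space M1"
    and S0: "sets M0 = sets borel" and S1: "sets M1 = sets borel"
    and g: "g \<in> borel_measurable borel" and I0: "integrable M0 g" and I1: "integrable M1 g"
  shows "integrable (mix M0 M1) g \<and> integral\<^sup>L (mix M0 M1) g = (integral\<^sup>L M0 g + integral\<^sup>L M1 g) / 2"
proof -
  let ?p = "\<lambda>x. max (g x) 0" and ?n = "\<lambda>x. max (- g x) 0"
  have A: "integrable (mix M0 M1) ?p \<and> integral\<^sup>L (mix M0 M1) ?p = (integral\<^sup>L M0 ?p + integral\<^sup>L M1 ?p) / 2"
    by (rule mix_integral_nonneg[OF P0 P1 S0 S1]) (use g I0 I1 in auto)
  have B: "integrable (mix M0 M1) ?n \<and> integral\<^sup>L (mix M0 M1) ?n = (integral\<^sup>L M0 ?n + integral\<^sup>L M1 ?n) / 2"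
    by (rule mix_integral_nonneg[OF P0 P1 S0 S1]) (use g I0 I1 in auto)
  have eq: "(\<lambda>x. ?p x - ?n x) = g" by (auto simp: fun_eq_iff max_def)
  have d: "integral\<^sup>L M g = integral\<^sup>L M ?p - integral\<^sup>L M ?n" if "integrable M g" for M
  proof -
    have "integral\<^sup>L M g = integral\<^sup>L M (\<lambda>x. ?p x - ?n x)" unfolding eq ..
    also have "\<dots> = integral\<^sup>L M ?p - integral\<^sup>L M ?n"
      by (rule Bochner_Integration.integral_diff) (use that in auto)
    finally show ?thesis .
  qed
  have "integrable (mix M0 M1) (\<lambda>x. ?p x - ?n x)" using A B by auto
  then have Ig: "integrable (mix M0 M1) g" unfolding eq .
  show ?thesis using Ig d[OF Ig] d[OF I0] d[OF I1] A B by (simp add: field_simps)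
qed


lemma sq_int:
  fixes f :: "'a \<Rightarrow> real"
  assumes P: "prob_space M" and I1: "integrable M f" and I2: "integrable M (\<lambda>x. (f x)\<^sup>2)"
  shows "integrable M (\<lambda>x. (f x - c)\<^sup>2) \<and>
         (\<integral>x. (f x - c)\<^sup>2 \<partial>M) = (\<integral>x. (f x)\<^sup>2 \<partial>M) - 2 * c * (\<integral>x. f x \<partial>M) + c\<^sup>2"
proof -
  interpret prob_space M by (rule P)
  have eq: "(\<lambda>x. (f x - c)\<^sup>2) = (\<lambda>x. ((f x)\<^sup>2 - (2 * c) * f x) + c\<^sup>2)"
    by (auto simp: fun_eq_iff power2_eq_square algebra_simps)
  have i1: "integrable M (\<lambda>x. (f x)\<^sup>2 - (2 * c) * f x)"
    using I1 I2 by auto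
  have i2: "integrable M (\<lambda>x. ((f x)\<^sup>2 - (2 * c) * f x) + c\<^sup>2)"
    using i1 by auto
  have "(\<integral>x. ((f x)\<^sup>2 - (2 * c) * f x) + c\<^sup>2 \<partial>M) = (\<integral>x. (f x)\<^sup>2 - (2 * c) * f x \<partial>M) + c\<^sup>2"
    using i1 by (subst Bochner_Integration.integral_add) (auto simp: prob_space)
  also have "(\<integral>x. (f x)\<^sup>2 - (2 * c) * f x \<partial>M) = (\<integral>x. (f x)\<^sup>2 \<partial>M) - 2 * c * (\<integral>x. f x \<partial>M)"
    using I1 I2 by (subst Bochner_Integration.integral_diff) auto
  finally show ?thesis using i2 unfolding eq by simp
qed

lemma meas_nth: "(\<lambda>x::real^'k. x $ j) \<in> borel_measurable borel"
  by simp

lemma meas_Max: "(\<lambda>x::real^'k. MAX j. x $ j) \<in> borel_measurable borel"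
  by (intro borel_measurable_Max) auto

lemma adm_second:
  assumes "admissible_law mu v M"
  shows "(\<integral>x. (x $ j)\<^sup>2 \<partial>M) = (v $ j)\<^sup>2 + (mu $ j)\<^sup>2"
proof -
  have P: "prob_space M" and I1: "integrable M (\<lambda>x. x $ j)" and I2: "integrable M (\<lambda>x. (x $ j)\<^sup>2)"
    and E: "(\<integral>x. x $ j \<partial>M) = mu $ j"
    and V: "(\<integral>x. (x $ j - (\<integral>y. y $ j \<partial>M))\<^sup>2 \<partial>M) = (v $ j)\<^sup>2"
    using assms unfolding admissible_law_def by auto
  from sq_int[OF P I1 I2, of "mu $ j"] V E show ?thesis
    by (simp add: power2_eq_square algebra_simps)
qed

lemma adm_intro:
  assumes "prob_space M" "sets M = sets borel"
    "\<And>j. integrable M (\<lambda>x. x $ j)" "\<And>j. integrable M (\<lambda>x. (x $ j)\<^sup>2)"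
    "\<And>j. (\<integral>x. x $ j \<partial>M) = mu $ j"
    "\<And>j. (\<integral>x. (x $ j)\<^sup>2 \<partial>M) = (v $ j)\<^sup>2 + (mu $ j)\<^sup>2"
  shows "admissible_law mu v M"
  unfolding admissible_law_def
proof (intro conjI allI)
  fix j
  from sq_int[OF assms(1) assms(3)[of j] assms(4)[of j], where c="mu $ j"] assms(5,6)[of j]
  show "(\<integral>x. (x $ j - (\<integral>y. y $ j \<partial>M))\<^sup>2 \<partial>M) = (v $ j)\<^sup>2"
    by (simp add: power2_eq_square algebra_simps)
qed (use assms in auto)


lemma abs_bound:
  fixes y :: "'a \<Rightarrow> real"
  assumes P: "prob_space M" and iy: "integrable M y" and iy2: "integrable M (\<lambda>x. (y x)\<^sup>2)"
    and E2: "(\<integral>x. (y x)\<^sup>2 \<partial>M) = w\<^sup>2" and w: "w \<ge> 0"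
  shows "(\<integral>x. \<bar>y x\<bar> \<partial>M) \<le> w"
proof -
  interpret prob_space M by (rule P)
  have key: "(\<integral>x. \<bar>y x\<bar> \<partial>M) \<le> w\<^sup>2 * (1 / (2 * t)) + t / 2" if t: "t > 0" for t
  proof -
    have pt: "\<bar>y x\<bar> \<le> (y x)\<^sup>2 * (1 / (2 * t)) + t / 2" for x
    proof -
      have "0 \<le> (\<bar>y x\<bar> - t)\<^sup>2" by simp
      then have "2 * t * \<bar>y x\<bar> \<le> (y x)\<^sup>2 + t\<^sup>2"
        by (simp add: power2_eq_square algebra_simps abs_mult_self_eq)
      then show ?thesis using t by (simp add: field_simps power2_eq_square)
    qed
    have i3: "integrable M (\<lambda>x. (y x)\<^sup>2 * (1 / (2 * t)) + t / 2)"
      using iy2 by auto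
    have "(\<integral>x. \<bar>y x\<bar> \<partial>M) \<le> (\<integral>x. (y x)\<^sup>2 * (1 / (2 * t)) + t / 2 \<partial>M)"
      by (rule integral_mono[OF _ i3]) (use iy pt in auto)
    also have "\<dots> = w\<^sup>2 * (1 / (2 * t)) + t / 2"
      using iy2 E2 by (subst Bochner_Integration.integral_add) (auto simp: prob_space)
    finally show ?thesis .
  qed
  show ?thesis
  proof (cases "w > 0")
    case True
    from key[OF True] True show ?thesis by (simp add: power2_eq_square field_simps)
  next
    case False
    with w have w0: "w = 0" by simp
    show ?thesis
    proof (rule ccontr)
      assume "\<not> ?thesis"
      then have a: "(\<integral>x. \<bar>y x\<bar> \<partial>M) > 0" using w0 by simp
      from key[OF a] w0 a show False by simp
    qed
  qed
qed

lemma adm_bounds: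
  fixes mu v :: "real^'k"
  assumes adm: "admissible_law mu v M" and vnn: "\<forall>j. v $ j \<ge> 0"
  shows "integrable M (\<lambda>x. MAX j. x $ j)"
    "\<And>j. mu $ j \<le> (\<integral>x. (MAX j. x $ j) \<partial>M)"
    "(\<integral>x. (MAX j. x $ j) \<partial>M) \<le> (MAX j. mu $ j) + (1/2) * (\<Sum>j\<in>UNIV. v $ j)"
proof -
  have P: "prob_space M" and S: "sets M = sets borel"
    and I1: "\<And>j. integrable M (\<lambda>x. x $ j)" and I2: "\<And>j. integrable M (\<lambda>x. (x $ j)\<^sup>2)"
    and E: "\<And>j. (\<integral>x. x $ j \<partial>M) = mu $ j"
    using adm unfolding admissible_law_def by auto
  interpret prob_space M by (rule P)
  have mM: "(\<lambda>x::real^'k. MAX j. x $ j) \<in> borel_measurable M"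
    using meas_Max by (simp add: measurable_cong_sets[OF S refl])
  have iS: "integrable M (\<lambda>x. \<Sum>j\<in>UNIV. \<bar>x $ j\<bar>)"
    using I1 by (intro Bochner_Integration.integrable_sum) auto
  have MaxIn: "(MAX j. x $ j) \<in> range (\<lambda>j. x $ j)" for x :: "real^'k"
    by (rule Max_in) auto
  have MaxGe: "x $ j \<le> (MAX j. x $ j)" for x :: "real^'k" and j
    by (rule Max_ge) auto
  show IM: "integrable M (\<lambda>x. MAX j. x $ j)"
  proof (rule Bochner_Integration.integrable_bound[OF iS mM], rule AE_I2)
    fix x :: "real^'k"
    obtain j0 where j0: "(MAX j. x $ j) = x $ j0" using MaxIn[of x] by (metis rangeE)
    have "\<bar>x $ j0\<bar> \<le> (\<Sum>j\<in>UNIV. \<bar>x $ j\<bar>)"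
      by (rule member_le_sum) auto
    then show "norm (MAX j. x $ j) \<le> norm (\<Sum>j\<in>UNIV. \<bar>x $ j\<bar>)"
      using j0 by (simp add: sum_nonneg)
  qed
  show "mu $ j \<le> (\<integral>x. (MAX j. x $ j) \<partial>M)" for j
  proof -
    have "(\<integral>x. x $ j \<partial>M) \<le> (\<integral>x. (MAX j. x $ j) \<partial>M)"
      by (rule integral_mono[OF I1 IM]) (rule MaxGe)
    then show ?thesis using E by simp
  qed
  let ?m = "MAX j. mu $ j"
  let ?h = "\<lambda>x::real^'k. ?m + (\<Sum>j\<in>UNIV. (\<bar>x $ j - mu $ j\<bar> + (x $ j - mu $ j)) / 2)"
  have iy: "integrable M (\<lambda>x. x $ j - mu $ j)" for j using I1 by auto
  have iy2: "integrable M (\<lambda>x. (x $ j - mu $ j)\<^sup>2)" for j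
    using sq_int[OF P I1 I2] by blast
  have Ey: "(\<integral>x. x $ j - mu $ j \<partial>M) = 0" for j
    using I1 E by (subst Bochner_Integration.integral_diff) (auto simp: prob_space)
  have Ey2: "(\<integral>x. (x $ j - mu $ j)\<^sup>2 \<partial>M) = (v $ j)\<^sup>2" for j
    using adm unfolding admissible_law_def by (simp add: E)
  have Ea: "(\<integral>x. \<bar>x $ j - mu $ j\<bar> \<partial>M) \<le> v $ j" for j
    by (rule abs_bound[OF P iy iy2 Ey2]) (use vnn in auto)
  have iT: "integrable M (\<lambda>x. (\<bar>x $ j - mu $ j\<bar> + (x $ j - mu $ j)) / 2)" for j
    using iy[of j] by auto
  have ET: "(\<integral>x. (\<bar>x $ j - mu $ j\<bar> + (x $ j - mu $ j)) / 2 \<partial>M) \<le> v $ j / 2" for j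
  proof -
    have "(\<integral>x. (\<bar>x $ j - mu $ j\<bar> + (x $ j - mu $ j)) / 2 \<partial>M)
        = ((\<integral>x. \<bar>x $ j - mu $ j\<bar> \<partial>M) + (\<integral>x. x $ j - mu $ j \<partial>M)) / 2"
      using iy[of j] by (simp add: Bochner_Integration.integral_add)
    then show ?thesis using Ea[of j] Ey[of j] by simp
  qed
  have ih: "integrable M ?h"
    using iT by (intro Bochner_Integration.integrable_add Bochner_Integration.integrable_sum) auto
  have pt: "(MAX j. x $ j) \<le> ?h x" for x :: "real^'k"
  proof -
    obtain j0 where j0: "(MAX j. x $ j) = x $ j0" using MaxIn[of x] by (metis rangeE)
    have "mu $ j0 \<le> ?m" by (rule Max_ge) auto
    moreover have "(\<bar>x $ j0 - mu $ j0\<bar> + (x $ j0 - mu $ j0)) / 2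
        \<le> (\<Sum>j\<in>UNIV. (\<bar>x $ j - mu $ j\<bar> + (x $ j - mu $ j)) / 2)"
      by (rule member_le_sum) auto
    moreover have "x $ j0 - mu $ j0 \<le> (\<bar>x $ j0 - mu $ j0\<bar> + (x $ j0 - mu $ j0)) / 2" by (simp add: field_simps abs_if)
    ultimately show ?thesis unfolding j0 by linarith
  qed
  have "(\<integral>x. (MAX j. x $ j) \<partial>M) \<le> (\<integral>x. ?h x \<partial>M)"
    by (rule integral_mono[OF IM ih pt])
  also have "(\<integral>x. ?h x \<partial>M) = ?m + (\<Sum>j\<in>UNIV. (\<integral>x. (\<bar>x $ j - mu $ j\<bar> + (x $ j - mu $ j)) / 2 \<partial>M))"
    using iT by (simp add: Bochner_Integration.integral_add Bochner_Integration.integral_sum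
        Bochner_Integration.integrable_sum prob_space)
  also have "\<dots> \<le> ?m + (\<Sum>j\<in>UNIV. v $ j / 2)"
    using ET by (intro add_left_mono sum_mono) auto
  finally show "(\<integral>x. (MAX j. x $ j) \<partial>M) \<le> ?m + (1/2) * (\<Sum>j\<in>UNIV. v $ j)"
    by (simp add: sum_divide_distrib)
qed


lemma adm_mix:
  fixes mu v mu0 v0 mu1 v1 :: "real^'k"
  assumes A0: "admissible_law mu0 v0 M0" and A1: "admissible_law mu1 v1 M1"
    and n0: "\<forall>j. v0 $ j \<ge> 0" and n1: "\<forall>j. v1 $ j \<ge> 0"
    and mu: "mu = (1/2) *\<^sub>R (mu0 + mu1)"
    and vv: "\<forall>j. (v $ j)\<^sup>2 = (1/2) * (((v0 $ j)\<^sup>2 + (mu0 $ j - mu $ j)\<^sup>2)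
                                     + ((v1 $ j)\<^sup>2 + (mu1 $ j - mu $ j)\<^sup>2))"
  shows "admissible_law mu v (mix M0 M1) \<and>
         (\<integral>x. (MAX j. x $ j) \<partial>mix M0 M1) = ((\<integral>x. (MAX j. x $ j) \<partial>M0) + (\<integral>x. (MAX j. x $ j) \<partial>M1)) / 2"
proof -
  have P0: "prob_space M0" and S0: "sets M0 = sets borel"
    and I10: "\<And>j. integrable M0 (\<lambda>x. x $ j)" and I20: "\<And>j. integrable M0 (\<lambda>x. (x $ j)\<^sup>2)"
    and E0: "\<And>j. (\<integral>x. x $ j \<partial>M0) = mu0 $ j"
    using A0 unfolding admissible_law_def by auto
  have P1: "prob_space M1" and S1: "sets M1 = sets borel"
    and I11: "\<And>j. integrable M1 (\<lambda>x. x $ j)" and I21: "\<And>j. integrable M1 (\<lambda>x. (x $ j)\<^sup>2)"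
    and E1: "\<And>j. (\<integral>x. x $ j \<partial>M1) = mu1 $ j"
    using A1 unfolding admissible_law_def by auto
  note MP = mix_props[OF P0 P1 S0 S1]
  have F1: "integrable (mix M0 M1) (\<lambda>x. x $ j) \<and> (\<integral>x. x $ j \<partial>mix M0 M1) = ((\<integral>x. x $ j \<partial>M0) + (\<integral>x. x $ j \<partial>M1)) / 2" for j
    by (rule mix_integral[OF P0 P1 S0 S1 meas_nth I10 I11])
  have m2: "(\<lambda>x::real^'k. (x $ j)\<^sup>2) \<in> borel_measurable borel" for j by simp
  have F2: "integrable (mix M0 M1) (\<lambda>x. (x $ j)\<^sup>2) \<and> (\<integral>x. (x $ j)\<^sup>2 \<partial>mix M0 M1) = ((\<integral>x. (x $ j)\<^sup>2 \<partial>M0) + (\<integral>x. (x $ j)\<^sup>2 \<partial>M1)) / 2" for j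
    by (rule mix_integral[OF P0 P1 S0 S1 m2 I20 I21])
  have FM: "integrable (mix M0 M1) (\<lambda>x. MAX j. x $ j) \<and> (\<integral>x. (MAX j. x $ j) \<partial>mix M0 M1) = ((\<integral>x. (MAX j. x $ j) \<partial>M0) + (\<integral>x. (MAX j. x $ j) \<partial>M1)) / 2"
    by (rule mix_integral[OF P0 P1 S0 S1 meas_Max adm_bounds(1)[OF A0 n0] adm_bounds(1)[OF A1 n1]])
  have muj: "mu $ j = (mu0 $ j + mu1 $ j) / 2" for j using mu by simp
  have "admissible_law mu v (mix M0 M1)"
  proof (rule adm_intro[OF MP(3) MP(1)])
    fix j
    show "integrable (mix M0 M1) (\<lambda>x. x $ j)" using F1 by blast
    show "integrable (mix M0 M1) (\<lambda>x. (x $ j)\<^sup>2)" using F2 by blast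
    have "(\<integral>x. x $ j \<partial>mix M0 M1) = (mu0 $ j + mu1 $ j) / 2" using F1[of j] E0 E1 by simp
    then show "(\<integral>x. x $ j \<partial>mix M0 M1) = mu $ j" using muj[of j] by simp
    have "(\<integral>x. (x $ j)\<^sup>2 \<partial>mix M0 M1) = (((v0 $ j)\<^sup>2 + (mu0 $ j)\<^sup>2) + ((v1 $ j)\<^sup>2 + (mu1 $ j)\<^sup>2)) / 2"
      using F2[of j] adm_second[OF A0, of j] adm_second[OF A1, of j] by simp
    also have "\<dots> = (v $ j)\<^sup>2 + (mu $ j)\<^sup>2"
      using vv[rule_format, of j] unfolding muj[of j] by (simp add: power2_eq_square field_simps)
    finally show "(\<integral>x. (x $ j)\<^sup>2 \<partial>mix M0 M1) = (v $ j)\<^sup>2 + (mu $ j)\<^sup>2" .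
  qed
  then show ?thesis using FM by simp
qed

lemma int_return:
  fixes f :: "real^'k \<Rightarrow> real"
  assumes f: "f \<in> borel_measurable borel"
  shows "integrable (return borel a) f"
  using f by (simp add: integrable_iff_bounded nn_integral_return)

lemma adm_point:
  fixes a :: "real^'k"
  shows "admissible_law a 0 (return borel a)"
proof (rule adm_intro)
  show "prob_space (return borel a)" by (rule prob_space_return) simp
  fix j
  show "integrable (return borel a) (\<lambda>x. x $ j)" by (rule int_return) simp
  show "integrable (return borel a) (\<lambda>x. (x $ j)\<^sup>2)" by (rule int_return) simp
  show "(\<integral>x. x $ j \<partial>return borel a) = a $ j" by (subst integral_return) auto
  show "(\<integral>x. (x $ j)\<^sup>2 \<partial>return borel a) = (0 $ j)\<^sup>2 + (a $ j)\<^sup>2" by (subst integral_return) auto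
qed simp

lemma adm_exists:
  fixes mu v :: "real^'k"
  assumes "\<forall>j. v $ j \<ge> 0"
  shows "\<exists>M. admissible_law mu v M"
proof -
  have e: "mu = (1/2) *\<^sub>R ((mu + v) + (mu - v))" by (simp add: vec_eq_iff)
  have vv: "\<forall>j. (v $ j)\<^sup>2 = (1/2) * ((((0::real^'k) $ j)\<^sup>2 + ((mu + v) $ j - mu $ j)\<^sup>2)
                                     + (((0::real^'k) $ j)\<^sup>2 + ((mu - v) $ j - mu $ j)\<^sup>2))"
    by (simp add: power2_eq_square)
  have "admissible_law mu v (mix (return borel (mu + v)) (return borel (mu - v)))"
    using adm_mix[OF adm_point[of "mu + v"] adm_point[of "mu - v"] _ _ e vv] by simp
  then show ?thesis by blast
qed


lemma S_props:
  fixes mu v :: "real^'k"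
  assumes vnn: "\<forall>j. v $ j \<ge> 0"
  defines "S \<equiv> {(\<integral>x. (MAX j. x $ j) \<partial>M) | M. admissible_law mu v M}"
  shows "S \<noteq> {}" "bdd_above S" "\<And>a. a \<in> S \<Longrightarrow> (MAX j. mu $ j) \<le> a"
    "\<And>a. a \<in> S \<Longrightarrow> a \<le> (MAX j. mu $ j) + (1/2) * (\<Sum>j\<in>UNIV. v $ j)"
proof -
  show ub: "a \<le> (MAX j. mu $ j) + (1/2) * (\<Sum>j\<in>UNIV. v $ j)" if "a \<in> S" for a
    using that adm_bounds(3)[OF _ vnn] unfolding S_def by blast
  show "S \<noteq> {}" using adm_exists[OF vnn, of mu] unfolding S_def by blast
  show "bdd_above S" using ub by (intro bdd_aboveI) blast
  show "(MAX j. mu $ j) \<le> a" if aS: "a \<in> S" for a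
  proof -
    obtain M where M: "admissible_law mu v M" and a: "a = (\<integral>x. (MAX j. x $ j) \<partial>M)"
      using aS unfolding S_def by blast
    obtain j0 where j0: "(MAX j. mu $ j) = mu $ j0"
    proof -
      have "(MAX j. mu $ j) \<in> range (\<lambda>j. mu $ j)" by (rule Max_in) auto
      then show ?thesis using that by (metis rangeE)
    qed
    show ?thesis using adm_bounds(2)[OF M vnn, of j0] j0 a by simp
  qed
qed

theorem lemma3p7:
  fixes mu v :: "real^'k"
  assumes v_nonneg: "\<forall>j. v $ j \<ge> 0"
  shows "((MAX j. mu $ j) \<le> fmax mu v
          \<and> fmax mu v \<le> (MAX j. mu $ j) + (1/2) * (\<Sum>j\<in>UNIV. v $ j))
       \<and> (\<forall>mu0 mu1 v0 v1 :: real^'k.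
           (\<forall>j. v0 $ j \<ge> 0) \<longrightarrow> (\<forall>j. v1 $ j \<ge> 0) \<longrightarrow>
           mu = (1/2) *\<^sub>R (mu0 + mu1) \<longrightarrow>
           (\<forall>j. (v $ j)\<^sup>2 = (1/2) * (((v0 $ j)\<^sup>2 + (mu0 $ j - mu $ j)\<^sup>2)
                                     + ((v1 $ j)\<^sup>2 + (mu1 $ j - mu $ j)\<^sup>2))) \<longrightarrow>
           (1/2) * (fmax mu0 v0 + fmax mu1 v1) \<le> fmax mu v)"
proof (intro conjI allI impI)
  note SP = S_props[OF v_nonneg, where mu=mu]
  let ?S = "{(\<integral>x. (MAX j. x $ j) \<partial>M) | M. admissible_law mu v M}"
  have F: "fmax mu v = Sup ?S" unfolding fmax_def ..
  obtain a where a: "a \<in> ?S" using SP(1) by blast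
  show "(MAX j. mu $ j) \<le> fmax mu v"
    unfolding F using SP(3)[OF a] cSup_upper[OF a SP(2)] by linarith
  show "fmax mu v \<le> (MAX j. mu $ j) + (1/2) * (\<Sum>j\<in>UNIV. v $ j)"
    unfolding F by (rule cSup_least[OF SP(1)]) (rule SP(4))
  fix mu0 mu1 v0 v1 :: "real^'k"
  assume n0: "\<forall>j. v0 $ j \<ge> 0" and n1: "\<forall>j. v1 $ j \<ge> 0"
    and mu: "mu = (1/2) *\<^sub>R (mu0 + mu1)"
    and vv: "\<forall>j. (v $ j)\<^sup>2 = (1/2) * (((v0 $ j)\<^sup>2 + (mu0 $ j - mu $ j)\<^sup>2)
                                     + ((v1 $ j)\<^sup>2 + (mu1 $ j - mu $ j)\<^sup>2))"
  note SP0 = S_props[OF n0, where mu=mu0] and SP1 = S_props[OF n1, where mu=mu1]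
  let ?S0 = "{(\<integral>x. (MAX j. x $ j) \<partial>M) | M. admissible_law mu0 v0 M}"
  let ?S1 = "{(\<integral>x. (MAX j. x $ j) \<partial>M) | M. admissible_law mu1 v1 M}"
  have F0: "fmax mu0 v0 = Sup ?S0" unfolding fmax_def ..
  have F1: "fmax mu1 v1 = Sup ?S1" unfolding fmax_def ..
  have key: "a0 + a1 \<le> 2 * fmax mu v" if h: "a0 \<in> ?S0" "a1 \<in> ?S1" for a0 a1
  proof -
    obtain M0 where M0: "admissible_law mu0 v0 M0" and a0: "a0 = (\<integral>x. (MAX j. x $ j) \<partial>M0)"
      using h(1) by blast
    obtain M1 where M1: "admissible_law mu1 v1 M1" and a1: "a1 = (\<integral>x. (MAX j. x $ j) \<partial>M1)"
      using h(2) by blast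
    note X = adm_mix[OF M0 M1 n0 n1 mu vv]
    have "(a0 + a1) / 2 \<in> {(\<integral>x. (MAX j. x $ j) \<partial>M) | M. admissible_law mu v M}"
      using X a0 a1 by (auto intro!: exI[of _ "mix M0 M1"])
    from cSup_upper[OF this SP(2)] show ?thesis unfolding F by simp
  qed
  have "a1 \<le> 2 * fmax mu v - fmax mu0 v0" if "a1 \<in> ?S1" for a1
  proof -
    have "fmax mu0 v0 \<le> 2 * fmax mu v - a1"
    proof (unfold F0, rule cSup_least[OF SP0(1)])
      fix a0 assume "a0 \<in> ?S0"
      from key[OF this that] show "a0 \<le> 2 * fmax mu v - a1" by linarith
    qed
    then show ?thesis by linarith
  qed
  then have "fmax mu1 v1 \<le> 2 * fmax mu v - fmax mu0 v0"
    unfolding F1 by (intro cSup_least[OF SP1(1)]) blast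
  then show "(1/2) * (fmax mu0 v0 + fmax mu1 v1) \<le> fmax mu v" by (simp add: field_simps)
qed

end
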